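(* Let $g\in\mathrm{SL}_3(\mathbb{R})$ and suppose there are $\mu>1$ and a positive integer $m$ such that $P_0:=\ker(g^m-\mu\,\mathrm{id})$ is two-dimensional and $L_0:=\ker(g^m-\mu^{-2}\mathrm{id})$ is one-dimensional. Let $X\subset\mathbb{RP}^2$ be a finite $g$-invariant set of lines contained in $P_0$, and let $\mathcal{A}$ be the set of prepared neighborhoods of $X$. Then $A_1\cap\cdots\cap A_n\in\mathcal{A}$ for all $A_1,\dots,A_n\in\mathcal{A}$, and $\bigcap_{A\in\mathcal{A}}A=\bigcup_{x\in X}\mathbb{P}(x\oplus L_0)$.
   Context: For a line $x$ and the line $L_0$, $\mathbb{P}(x\oplus L_0)\subset\mathbb{RP}^2$ denotes the set of lines contained in the subspace $x\oplus L_0$. A set $A\subset\mathbb{RP}^2$ is a prepared neighborhood of $X$ (with respect to $g$) if $X$ is contained in the interior of $A$, $g(A)=A$, and $A=\bigcup_{x\in A}\mathbb{P}(x\oplus L_0)$. *)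

theory Defs
  imports "HOL-Analysis.Analysis"
begin

definition is_line :: "(real^3) set \<Rightarrow> bool" where
  "is_line x \<longleftrightarrow> subspace x \<and> dim x = 1"

definition RP2 :: "(real^3) set set" where
  "RP2 = {x. is_line x}"

text \<open>Quotient topology on RP^2 (from R^3 minus 0): a set U of lines is open iff
  the punctured cone it spans is open in R^3.\<close>
definition rp2_open :: "(real^3) set set \<Rightarrow> bool" where
  "rp2_open U \<longleftrightarrow> U \<subseteq> RP2 \<and> open (\<Union>U - {0})"

definition rp2_interior :: "(real^3) set set \<Rightarrow> (real^3) set set" where
  "rp2_interior A = \<Union>{U. rp2_open U \<and> U \<subseteq> A}"

definition act :: "real^3^3 \<Rightarrow> (real^3) set set \<Rightarrow> (real^3) set set" where
  "act g A = (\<lambda>x. (\<lambda>v. g *v v) ` x) ` A"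

definition projset :: "(real^3) set \<Rightarrow> (real^3) set set" where
  "projset V = {y \<in> RP2. y \<subseteq> V}"

text \<open>x \<oplus> L0 as the subspace spanned by x and L0.\<close>
definition prepared_nbhd ::
  "real^3^3 \<Rightarrow> (real^3) set \<Rightarrow> (real^3) set set \<Rightarrow> (real^3) set set \<Rightarrow> bool" where
  "prepared_nbhd g L0 X A \<longleftrightarrow>
     A \<subseteq> RP2 \<and> X \<subseteq> rp2_interior A \<and> act g A = A \<and>
     A = (\<Union>x\<in>A. projset (span (x \<union> L0)))"

end

theory Submission
  imports Defs
begin

lemma line_span:
  assumes "is_line x" obtains a where "a \<noteq> 0" "x = span {a}"
proof -
  have sx: "subspace x" and dx: "dim x = 1" using assms by (auto simp: is_line_def)
  obtain B where B: "B \<subseteq> x" "independent B" "x \<subseteq> span B" "card B = dim x"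
    by (rule basis_exists)
  then obtain a where "B = {a}" using dx by (auto simp: card_Suc_eq)
  moreover have "span B \<subseteq> x" using B(1) sx by (simp add: span_minimal)
  ultimately show ?thesis using that B by (metis dependent_zero insertI1 subset_antisym)
qed

lemma line_of: "a \<noteq> (0::real^3) \<Longrightarrow> is_line (span {a})"
  by (simp add: is_line_def dim_span)

lemma line_sub_eq: "is_line w \<Longrightarrow> is_line z \<Longrightarrow> w \<subseteq> z \<Longrightarrow> w = z"
  by (simp add: is_line_def subspace_dim_equal)

lemma line_eq: "is_line x \<Longrightarrow> v \<in> x \<Longrightarrow> v \<noteq> 0 \<Longrightarrow> x = span {v}"
  by (metis line_of line_sub_eq is_line_def span_minimal empty_subsetI insert_subset)

lemma line_image: "linear f \<Longrightarrow> inj f \<Longrightarrow> is_line (x::(real^3) set) \<Longrightarrow> is_line (f ` x)"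
  unfolding is_line_def
  by (metis dim_image_eq inj_on_subset linear_subspace_image subset_UNIV)

lemma span_Un_span: "span (span S \<union> span T) = span (S \<union> T)"
proof
  show "span (span S \<union> span T) \<subseteq> span (S \<union> T)"
    by (metis Un_subset_iff span_minimal span_mono subspace_span sup_ge1 sup_ge2)
  show "span (S \<union> T) \<subseteq> span (span S \<union> span T)"
    by (meson Un_mono span_mono span_superset)
qed

lemma exchange:
  assumes "is_line z" "is_line w" "is_line L" "z \<noteq> L" "w \<noteq> L" "w \<subseteq> span (z \<union> L)"
  shows "z \<subseteq> span (w \<union> L)"
proof -
  obtain a where a: "a \<noteq> 0" "z = span {a}" using assms(1) line_span by blast
  obtain b where b: "b \<noteq> 0" "w = span {b}" using assms(2) line_span by blast
  obtain c where c: "c \<noteq> 0" "L = span {c}" using assms(3) line_span by blast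
  have "b \<in> w" using b by (simp add: span_base)
  hence "b \<in> span (insert a {c})" using assms(6) a b c span_Un_span[of "{a}" "{c}"]
    by (auto simp: insert_commute)
  moreover have "b \<notin> span {c}"
  proof
    assume "b \<in> span {c}"
    hence "w \<subseteq> L" using b c by (simp add: span_minimal)
    thus False using assms line_sub_eq by blast
  qed
  ultimately have "a \<in> span (insert b {c})" by (rule in_span_insert)
  hence "a \<in> span (w \<union> L)" using b c span_Un_span[of "{b}" "{c}"] by (simp add: insert_commute)
  thus ?thesis using a by (simp add: span_minimal)
qed

lemma act_eq: "act g A = (\<lambda>x. (\<lambda>v. g *v v) ` x) ` A" by (simp add: act_def)

lemma rp2_line: "z \<in> RP2 \<longleftrightarrow> is_line z" by (simp add: RP2_def)

lemma construct:
  fixes g :: "real^3^3" and h :: "real^3 \<Rightarrow> real^3"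
  defines "f \<equiv> (\<lambda>v. g *v v)"
  assumes hf: "\<And>v. h (f v) = v" and fh: "\<And>v. f (h v) = v" and lh: "linear h"
    and fin: "finite HH" and HHs: "\<And>H. H \<in> HH \<Longrightarrow> subspace H \<and> L0 \<subseteq> H"
    and HHf: "\<And>H. H \<in> HH \<Longrightarrow> f ` H \<in> HH \<and> h ` H \<in> HH"
    and L0: "is_line L0" and fL0: "f ` L0 = L0"
    and XR: "X \<subseteq> RP2" and XH: "\<And>x H. x \<in> X \<Longrightarrow> H \<in> HH \<Longrightarrow> \<not> x \<subseteq> H"
  shows "prepared_nbhd g L0 X {z \<in> RP2. z = L0 \<or> (\<forall>H\<in>HH. \<not> z \<subseteq> H)}"
proof -
  define A where "A = {z \<in> RP2. z = L0 \<or> (\<forall>H\<in>HH. \<not> z \<subseteq> H)}"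
  have lf: "linear f" unfolding f_def by (rule matrix_vector_mul_linear)
  have injf: "inj f" by (metis hf injI)
  have injh: "inj h" by (metis fh injI)
  have hfS: "h ` (f ` S) = S" for S by (simp add: image_image hf)
  have fhS: "f ` (h ` S) = S" for S by (simp add: image_image fh)
  have hL0: "h ` L0 = L0" using fL0 hfS by metis
  have A1: "f ` z \<in> A" if "z \<in> A" for z
  proof -
    have "f ` z \<in> RP2" using that line_image[OF lf injf] by (auto simp: A_def rp2_line)
    moreover have "f ` z = L0 \<or> (\<forall>H\<in>HH. \<not> f ` z \<subseteq> H)"
    proof (cases "z = L0")
      case True then show ?thesis using fL0 by simp
    next
      case False
      hence zH: "\<forall>H\<in>HH. \<not> z \<subseteq> H" using that by (auto simp: A_def)
      { fix H assume "H \<in> HH" "f ` z \<subseteq> H"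
        hence "z \<subseteq> h ` H" using hfS by (metis image_mono)
        hence False using zH HHf \<open>H \<in> HH\<close> by blast }
      thus ?thesis by blast
    qed
    ultimately show ?thesis by (simp add: A_def)
  qed
  have A2: "h ` z \<in> A" if "z \<in> A" for z
  proof -
    have "h ` z \<in> RP2" using that line_image[OF lh injh] by (auto simp: A_def rp2_line)
    moreover have "h ` z = L0 \<or> (\<forall>H\<in>HH. \<not> h ` z \<subseteq> H)"
    proof (cases "z = L0")
      case True then show ?thesis using hL0 by simp
    next
      case False
      hence zH: "\<forall>H\<in>HH. \<not> z \<subseteq> H" using that by (auto simp: A_def)
      { fix H assume "H \<in> HH" "h ` z \<subseteq> H"
        hence "z \<subseteq> f ` H" using fhS by (metis image_mono)
        hence False using zH HHf \<open>H \<in> HH\<close> by blast }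
      thus ?thesis by blast
    qed
    ultimately show ?thesis by (simp add: A_def)
  qed
  have act: "act g A = A"
  proof
    show "act g A \<subseteq> A" using A1 by (auto simp: act_def f_def[symmetric])
    show "A \<subseteq> act g A"
    proof
      fix z assume "z \<in> A"
      hence "h ` z \<in> A" "z = f ` (h ` z)" using A2 fhS by auto
      thus "z \<in> act g A" by (auto simp: act_def f_def[symmetric])
    qed
  qed
  define U where "U = {z \<in> RP2. \<forall>H\<in>HH. \<not> z \<subseteq> H}"
  have UA: "U \<subseteq> A" by (auto simp: U_def A_def)
  have XU: "X \<subseteq> U" using XR XH by (auto simp: U_def)
  have Ueq: "\<Union>U - {0} = - ({0} \<union> \<Union>HH)"
  proof
    show "\<Union>U - {0} \<subseteq> - ({0} \<union> \<Union>HH)"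
    proof
      fix v assume "v \<in> \<Union>U - {0}"
      then obtain z where z: "z \<in> U" "v \<in> z" "v \<noteq> 0" by auto
      hence zs: "z = span {v}" using line_eq by (auto simp: U_def rp2_line)
      { fix H assume "H \<in> HH" "v \<in> H"
        hence "z \<subseteq> H" using zs HHs by (simp add: span_minimal)
        hence False using z \<open>H \<in> HH\<close> by (auto simp: U_def) }
      thus "v \<in> - ({0} \<union> \<Union>HH)" using z by blast
    qed
    show "- ({0} \<union> \<Union>HH) \<subseteq> \<Union>U - {0}"
    proof
      fix v assume v: "v \<in> - ({0} \<union> \<Union>HH)"
      have "span {v} \<in> U" using v line_of[of v] span_base[of v "{v}"]
        by (auto simp: U_def rp2_line)
      moreover have "v \<in> span {v}" by (simp add: span_base)
      ultimately show "v \<in> \<Union>U - {0}" using v by blast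
    qed
  qed
  have "closed ({0} \<union> \<Union>HH)"
    using fin HHs by (intro closed_Union closed_Un) (auto intro: closed_subspace)
  hence "rp2_open U" unfolding rp2_open_def Ueq by (auto simp: U_def open_Compl)
  hence int: "X \<subseteq> rp2_interior A" using XU UA by (auto simp: rp2_interior_def)
  have sat: "A = (\<Union>x\<in>A. projset (span (x \<union> L0)))"
  proof
    show "A \<subseteq> (\<Union>x\<in>A. projset (span (x \<union> L0)))"
    proof
      fix z assume z: "z \<in> A"
      have "z \<subseteq> span (z \<union> L0)" by (meson span_superset Un_subset_iff)
      hence "z \<in> projset (span (z \<union> L0))" using z by (simp add: projset_def A_def)
      thus "z \<in> (\<Union>x\<in>A. projset (span (x \<union> L0)))" using z by blast
    qed
    show "(\<Union>x\<in>A. projset (span (x \<union> L0))) \<subseteq> A"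
    proof
      fix w assume "w \<in> (\<Union>x\<in>A. projset (span (x \<union> L0)))"
      then obtain z where z: "z \<in> A" "w \<in> RP2" "w \<subseteq> span (z \<union> L0)"
        by (auto simp: projset_def)
      show "w \<in> A"
      proof (cases "w = L0")
        case True thus ?thesis using z by (simp add: A_def)
      next
        case wL: False
        show ?thesis
        proof (cases "z = L0")
          case True
          hence "w \<subseteq> L0" using z L0 by (metis is_line_def span_eq_iff sup.idem)
          hence False using wL z L0 line_sub_eq by (auto simp: rp2_line)
          thus ?thesis ..
        next
          case zL: False
          hence zH: "\<forall>H\<in>HH. \<not> z \<subseteq> H" using z by (auto simp: A_def)
          have zw: "z \<subseteq> span (w \<union> L0)"
            using exchange[of z w L0] z zL wL L0 by (auto simp: A_def rp2_line)
          { fix H assume H: "H \<in> HH" "w \<subseteq> H"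
            hence "span (w \<union> L0) \<subseteq> H" using HHs by (simp add: span_minimal)
            hence False using zw zH H by blast }
          thus ?thesis using z by (auto simp: A_def)
        qed
      qed
    qed
  qed
  have "A \<subseteq> RP2" by (auto simp: A_def)
  thus ?thesis using int act sat unfolding prepared_nbhd_def A_def by blast
qed

lemma open_Int_lines:
  assumes "rp2_open U" "rp2_open V" shows "rp2_open (U \<inter> V)"
proof -
  have "\<Union>(U \<inter> V) - {0} = (\<Union>U - {0}) \<inter> (\<Union>V - {0})"
  proof
    show "\<Union>(U \<inter> V) - {0} \<subseteq> (\<Union>U - {0}) \<inter> (\<Union>V - {0})" by blast
    show "(\<Union>U - {0}) \<inter> (\<Union>V - {0}) \<subseteq> \<Union>(U \<inter> V) - {0}"
    proof
      fix v assume "v \<in> (\<Union>U - {0}) \<inter> (\<Union>V - {0})"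
      then obtain u w where "u \<in> U" "w \<in> V" "v \<in> u" "v \<in> w" "v \<noteq> 0" by blast
      moreover have "u \<in> RP2" "w \<in> RP2" using assms calculation by (auto simp: rp2_open_def)
      ultimately have "u = w" using line_eq by (metis rp2_line)
      thus "v \<in> \<Union>(U \<inter> V) - {0}" using \<open>u \<in> U\<close> \<open>w \<in> V\<close> \<open>v \<in> u\<close> \<open>v \<noteq> 0\<close> by blast
    qed
  qed
  thus ?thesis using assms by (auto simp: rp2_open_def)
qed

lemma prep_Int:
  assumes inj: "inj (\<lambda>v. (g::real^3^3) *v v)"
    and pA: "prepared_nbhd g L0 X A" and pB: "prepared_nbhd g L0 X B"
  shows "prepared_nbhd g L0 X (A \<inter> B)"
proof -
  have i1: "X \<subseteq> rp2_interior (A \<inter> B)"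
  proof
    fix x assume "x \<in> X"
    then obtain U V where "rp2_open U" "U \<subseteq> A" "x \<in> U" "rp2_open V" "V \<subseteq> B" "x \<in> V"
    proof -
      have "x \<in> \<Union> {U. rp2_open U \<and> U \<subseteq> A}" "x \<in> \<Union> {U. rp2_open U \<and> U \<subseteq> B}"
        using pA pB \<open>x \<in> X\<close> by (auto simp: prepared_nbhd_def rp2_interior_def)
      thus ?thesis using that by blast
    qed
    thus "x \<in> rp2_interior (A \<inter> B)" using open_Int_lines unfolding rp2_interior_def
      by (metis (no_types, lifting) IntI Int_mono Union_iff mem_Collect_eq)
  qed
  have injS: "inj (\<lambda>x. (\<lambda>v. g *v v) ` x)" using inj by (meson inj_image_eq_iff injI)
  have "act g (A \<inter> B) = act g A \<inter> act g B"
    unfolding act_def by (rule image_Int[OF injS])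
  hence a1: "act g (A \<inter> B) = A \<inter> B" using pA pB by (simp add: prepared_nbhd_def)
  have sA: "\<And>x. x \<in> A \<Longrightarrow> projset (span (x \<union> L0)) \<subseteq> A"
    using pA unfolding prepared_nbhd_def by blast
  have sB: "\<And>x. x \<in> B \<Longrightarrow> projset (span (x \<union> L0)) \<subseteq> B"
    using pB unfolding prepared_nbhd_def by blast
  have self: "x \<in> RP2 \<Longrightarrow> x \<in> projset (span (x \<union> L0))" for x
    by (simp add: projset_def) (meson span_superset Un_subset_iff)
  have s1: "A \<inter> B = (\<Union>x\<in>A \<inter> B. projset (span (x \<union> L0)))"
  proof
    show "A \<inter> B \<subseteq> (\<Union>x\<in>A \<inter> B. projset (span (x \<union> L0)))"
      using self pA by (auto simp: prepared_nbhd_def)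
    show "(\<Union>x\<in>A \<inter> B. projset (span (x \<union> L0))) \<subseteq> A \<inter> B" using sA sB by blast
  qed
  show ?thesis using pA i1 a1 s1 by (auto simp: prepared_nbhd_def)
qed

lemma funpow_linear: fixes f :: "'a::real_vector \<Rightarrow> 'a" shows "linear f \<Longrightarrow> linear (f ^^ k)"
proof (induction k)
  case 0
  have "f ^^ 0 = id" by (rule ext) simp
  thus ?case by (metis linear_id)
next
  case (Suc k)
  have "f ^^ Suc k = f \<circ> f ^^ k" by (rule ext) simp
  thus ?case using Suc linear_compose by metis
qed

theorem mainTheorem11:
  fixes g :: "real^3^3" and \<mu> :: real and m :: nat
    and P0 L0 :: "(real^3) set" and X :: "(real^3) set set"
  assumes "det g = 1"
    and "\<mu> > 1" and "m > 0"
    and "P0 = {v. ((\<lambda>w. g *v w) ^^ m) v - \<mu> *\<^sub>R v = 0}"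
    and "dim P0 = 2"
    and "L0 = {v. ((\<lambda>w. g *v w) ^^ m) v - (\<mu> powr -2) *\<^sub>R v = 0}"
    and "dim L0 = 1"
    and "finite X" and "X \<subseteq> RP2" and "act g X = X"
    and "\<forall>x\<in>X. x \<subseteq> P0"
  shows "(\<forall>F. finite F \<and> F \<noteq> {} \<and> F \<subseteq> {A. prepared_nbhd g L0 X A}
             \<longrightarrow> prepared_nbhd g L0 X (\<Inter>F))
       \<and> \<Inter>{A. prepared_nbhd g L0 X A} = (\<Union>x\<in>X. projset (span (x \<union> L0)))"
proof -
  define f where "f = (\<lambda>w. g *v w)"
  define F where "F = f ^^ m"
  define \<nu> where "\<nu> = \<mu> powr -2"
  have P0: "P0 = {v. F v - \<mu> *\<^sub>R v = 0}" using assms(4) by (simp add: F_def f_def)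
  have L0d: "L0 = {v. F v - \<nu> *\<^sub>R v = 0}" using assms(6) by (simp add: F_def f_def \<nu>_def)
  have "invertible g" using assms(1) by (simp add: invertible_det_nz)
  then obtain gi where gi: "g ** gi = mat 1" "gi ** g = mat 1" by (auto simp: invertible_def)
  define h where "h = (\<lambda>w. gi *v w)"
  have hf: "\<And>v. h (f v) = v" using gi by (simp add: h_def f_def matrix_vector_mul_assoc)
  have fh: "\<And>v. f (h v) = v" using gi by (simp add: h_def f_def matrix_vector_mul_assoc)
  have lf: "linear f" by (simp add: f_def matrix_vector_mul_linear)
  have lh: "linear h" by (simp add: h_def matrix_vector_mul_linear)
  have injf: "inj f" by (metis hf injI)
  have injfk: "inj (f ^^ k)" for k using injf by (rule inj_fn)
  have lfk: "linear (f ^^ k)" for k using lf by (rule funpow_linear)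
  have lF: "linear F" by (simp add: F_def lfk)
  have injF: "inj F" by (simp add: F_def injfk)
  have hfS: "h ` (f ` S) = S" for S by (simp add: image_image hf)
  have \<nu>\<mu>: "\<nu> \<noteq> \<mu>" using assms(2) powr_less_one[of \<mu> "-2"] by (simp add: \<nu>_def)
  have sP0: "subspace P0" unfolding P0 subspace_def
    by (simp add: linear_0[OF lF] linear_add[OF lF] linear_scale[OF lF] algebra_simps)
  have sL0: "subspace L0" unfolding L0d subspace_def
    by (simp add: linear_0[OF lF] linear_add[OF lF] linear_scale[OF lF] algebra_simps)
  have lineL0: "is_line L0" using sL0 assms(7) by (simp add: is_line_def)
  have PL: "P0 \<inter> L0 = {0}"
  proof -
    { fix v assume "v \<in> P0" "v \<in> L0"
      hence "\<mu> *\<^sub>R v = \<nu> *\<^sub>R v" using P0 L0d by simp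
      hence "v = 0" using \<nu>\<mu> by (metis scaleR_cancel_right) }
    thus ?thesis using sP0 sL0 by (auto simp: subspace_0)
  qed
  have decomp: "\<exists>p l. p \<in> P0 \<and> l \<in> L0 \<and> b = p + l" for b
  proof -
    define S where "S = {x + y |x y. x \<in> P0 \<and> y \<in> L0}"
    have "dim S + dim (P0 \<inter> L0) = dim P0 + dim L0" unfolding S_def
      by (rule dim_sums_Int[OF sP0 sL0])
    hence "dim S = DIM(real^3)" using PL assms(5,7) by simp
    hence "span S = UNIV" using dim_eq_full[of S] by simp
    moreover have "subspace S" unfolding S_def by (rule subspace_sums[OF sP0 sL0])
    ultimately have "S = UNIV" by (metis span_eq_iff)
    thus ?thesis unfolding S_def by blast
  qed
  have fL0: "f ` L0 = L0"
  proof -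
    have "f ` L0 \<subseteq> L0"
    proof
      fix w assume "w \<in> f ` L0"
      then obtain v where v: "v \<in> L0" "w = f v" by auto
      have "F (f v) = f (F v)" unfolding F_def by (simp add: funpow_swap1)
      also have "F v = \<nu> *\<^sub>R v" using v L0d by simp
      finally have "F w = \<nu> *\<^sub>R w" using v linear_scale[OF lf] by simp
      thus "w \<in> L0" using L0d by simp
    qed
    moreover have "dim (f ` L0) = dim L0" using lf injf by (simp add: dim_image_eq inj_on_subset)
    moreover have "subspace (f ` L0)" using lf sL0 by (rule linear_subspace_image)
    ultimately show ?thesis using sL0 subspace_dim_equal by (metis order_refl)
  qed
  have fkL0: "(f ^^ k) ` L0 = L0" for k
  proof (induction k)
    case (Suc k)
    have "(f ^^ Suc k) ` L0 = f ` ((f ^^ k) ` L0)" by (simp add: image_image)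
    thus ?case using Suc fL0 by simp
  qed simp
  have fkX: "(\<lambda>x. (f ^^ k) ` x) ` X = X" for k
  proof (induction k)
    case 0 thus ?case by simp
  next
    case (Suc k)
    have "(\<lambda>x. (f ^^ Suc k) ` x) ` X = (\<lambda>x. f ` x) ` ((\<lambda>x. (f ^^ k) ` x) ` X)"
      by (simp add: image_image image_comp)
    also have "\<dots> = X" using Suc assms(10) by (simp add: act_def f_def)
    finally show ?case .
  qed
  have XL: "x \<noteq> L0" if "x \<in> X" for x
  proof
    assume "x = L0"
    hence "L0 \<subseteq> P0" using that assms(11) by auto
    hence "L0 \<subseteq> {0}" using PL by blast
    hence "dim L0 = 0" by (metis dim_singleton dim_subset le_zero_eq)
    thus False using assms(7) by simp
  qed
  have Xline: "x \<in> X \<Longrightarrow> is_line x" for x using assms(9) by (auto simp: rp2_line)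
  have FH: "F ` H = H" if sH: "subspace H" and LH: "L0 \<subseteq> H" for H
  proof -
    have "F ` H \<subseteq> H"
    proof
      fix w assume "w \<in> F ` H"
      then obtain v where v: "v \<in> H" "w = F v" by auto
      obtain p l where pl: "p \<in> P0" "l \<in> L0" "v = p + l" using decomp by blast
      have "F v = \<mu> *\<^sub>R p + \<nu> *\<^sub>R l"
        using pl P0 L0d linear_add[OF lF] by simp
      also have "\<dots> = \<mu> *\<^sub>R v + (\<nu> - \<mu>) *\<^sub>R l" using pl by (simp add: algebra_simps)
      finally have "F v = \<mu> *\<^sub>R v + (\<nu> - \<mu>) *\<^sub>R l" .
      moreover have "l \<in> H" using pl LH by auto
      ultimately show "w \<in> H" using v sH by (simp add: subspace_add subspace_scale)
    qed
    moreover have "dim (F ` H) = dim H" using lF injF by (simp add: dim_image_eq inj_on_subset)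
    moreover have "subspace (F ` H)" using lF sH by (rule linear_subspace_image)
    ultimately show ?thesis using sH subspace_dim_equal by (metis order_refl)
  qed
  define B where "B = (\<Union>x\<in>X. projset (span (x \<union> L0)))"
  have part1: "\<forall>F. finite F \<and> F \<noteq> {} \<and> F \<subseteq> {A. prepared_nbhd g L0 X A}
             \<longrightarrow> prepared_nbhd g L0 X (\<Inter>F)"
  proof (intro allI impI)
    fix FF :: "(real^3) set set set" assume "finite FF \<and> FF \<noteq> {} \<and> FF \<subseteq> {A. prepared_nbhd g L0 X A}"
    hence "finite FF" "FF \<noteq> {}" "FF \<subseteq> {A. prepared_nbhd g L0 X A}" by auto
    thus "prepared_nbhd g L0 X (\<Inter>FF)"
    proof (induction FF rule: finite_ne_induct)
      case (singleton x) thus ?case by simp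
    next
      case (insert x FF)
      thus ?case using prep_Int[of g L0 X x "\<Inter>FF"] injf by (simp add: f_def)
    qed
  qed
  have BA: "B \<subseteq> A" if "prepared_nbhd g L0 X A" for A
  proof -
    have "X \<subseteq> A" using that by (auto simp: prepared_nbhd_def rp2_interior_def)
    hence "\<And>x. x \<in> X \<Longrightarrow> projset (span (x \<union> L0)) \<subseteq> A"
      using that unfolding prepared_nbhd_def by blast
    thus ?thesis by (auto simp: B_def)
  qed
  have A0: "prepared_nbhd g L0 X {z \<in> RP2. z = L0 \<or> (\<forall>H\<in>{}. \<not> z \<subseteq> H)}"
    using construct[of h g "{}" L0 X] hf fh lh lineL0 fL0 assms(9) by (simp add: f_def)
  have part2: "\<Inter>{A. prepared_nbhd g L0 X A} \<subseteq> B"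
  proof (cases "X = {}")
    case True
    have "prepared_nbhd g L0 X {}" using True by (simp add: prepared_nbhd_def act_def)
    thus ?thesis by blast
  next
    case Xne: False
    show ?thesis
    proof
      fix y assume y: "y \<in> \<Inter>{A. prepared_nbhd g L0 X A}"
      show "y \<in> B"
      proof (rule ccontr)
        assume yB: "y \<notin> B"
        have yR: "y \<in> RP2" using y A0 by blast
        obtain x0 where x0: "x0 \<in> X" using Xne by blast
        have "L0 \<in> projset (span (x0 \<union> L0))" using lineL0
          by (simp add: projset_def rp2_line) (meson span_superset Un_subset_iff)
        hence yL: "y \<noteq> L0" using yB x0 by (auto simp: B_def)
        define H0 where "H0 = span (y \<union> L0)"
        define HH where "HH = (\<lambda>k. (f ^^ k) ` H0) ` {..<m}"
        have sH0: "subspace H0" by (simp add: H0_def)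
        have LH0: "L0 \<subseteq> H0" unfolding H0_def by (meson span_superset Un_subset_iff)
        have yH0: "y \<subseteq> H0" unfolding H0_def by (meson span_superset Un_subset_iff)
        have FH0: "(f ^^ m) ` H0 = H0" using FH[OF sH0 LH0] by (simp add: F_def)
        have fin: "finite HH" by (simp add: HH_def)
        have memHH: "k < m \<Longrightarrow> (f ^^ k) ` H0 \<in> HH" for k unfolding HH_def by blast
        have HHs: "subspace H \<and> L0 \<subseteq> H" if HH1: "H \<in> HH" for H
        proof -
          obtain k where k: "H = (f ^^ k) ` H0" using HH1 unfolding HH_def by blast
          have "subspace H" using k lfk sH0 by (simp add: linear_subspace_image)
          moreover have "L0 \<subseteq> H" using k fkL0[of k] LH0 by (metis image_mono)
          ultimately show ?thesis by simp
        qed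
        have HHf: "f ` H \<in> HH \<and> h ` H \<in> HH" if HH1: "H \<in> HH" for H
        proof -
          obtain k where k: "k < m" "H = (f ^^ k) ` H0" using HH1 unfolding HH_def by blast
          have fH: "f ` H = (f ^^ Suc k) ` H0" using k by (simp add: image_comp)
          have "f ` H \<in> HH"
          proof (cases "Suc k = m")
            case True
            hence "f ` H = (f ^^ 0) ` H0" using fH FH0 by simp
            thus ?thesis using assms(3) memHH by metis
          next
            case False thus ?thesis using fH k memHH by (metis Suc_lessI)
          qed
          moreover have "h ` H \<in> HH"
          proof (cases k)
            case 0
            have "H = (f ^^ m) ` H0" using k 0 FH0 by simp
            also have "\<dots> = f ` ((f ^^ (m - 1)) ` H0)" using assms(3)
              by (metis Suc_diff_1 funpow.simps(2) image_comp)
            finally have "h ` H = (f ^^ (m - 1)) ` H0" using hfS by simp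
            moreover have "m - 1 < m" using assms(3) by simp
            ultimately show ?thesis using memHH by simp
          next
            case (Suc j)
            hence "H = f ` ((f ^^ j) ` H0)" using k by (simp add: image_comp)
            hence "h ` H = (f ^^ j) ` H0" using hfS by simp
            thus ?thesis using k Suc memHH by (metis Suc_lessD)
          qed
          ultimately show ?thesis ..
        qed
        have XH: "\<not> x \<subseteq> H" if x: "x \<in> X" and H: "H \<in> HH" for x H
        proof
          assume xH: "x \<subseteq> H"
          obtain k where k: "H = (f ^^ k) ` H0" using H unfolding HH_def by blast
          obtain x' where x': "x' \<in> X" "x = (f ^^ k) ` x'" using x fkX[of k] by (metis imageE)
          have "x' \<subseteq> H0" using xH k x' inj_image_subset_iff[OF injfk] by metis
          hence "y \<subseteq> span (x' \<union> L0)"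
            using exchange[of y x' L0] yR Xline[OF x'(1)] lineL0 yL XL[OF x'(1)] H0_def
            by (auto simp: rp2_line)
          hence "y \<in> B" using yR x' by (auto simp: B_def projset_def)
          thus False using yB by simp
        qed
        have "prepared_nbhd g L0 X {z \<in> RP2. z = L0 \<or> (\<forall>H\<in>HH. \<not> z \<subseteq> H)}"
          using construct[of h g HH L0 X] hf fh lh fin HHs HHf lineL0 fL0 assms(9) XH
          by (simp add: f_def)
        hence "y \<in> {z \<in> RP2. z = L0 \<or> (\<forall>H\<in>HH. \<not> z \<subseteq> H)}" using y by blast
        moreover have "H0 \<in> HH" using assms(3) memHH[of 0] by simp
        ultimately show False using yL yH0 by blast
      qed
    qed
  qed
  have "\<Inter>{A. prepared_nbhd g L0 X A} = B" using part2 BA by blast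
  thus ?thesis using part1 by (simp add: B_def)
qed

end
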